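(* Let $n\ge3$, let $F(x,y)\in\mathbb{Z}[x,y]$ be a binary form of degree $n$ irreducible over $\mathbb{Q}$ with $s+1$ nonzero coefficients and discriminant $D$, and let $h,\kappa,Y_S$ be as in the context. Write $F(x,y)=a\prod_{i=1}^n(x-\alpha_iy)$ and $L_i(x,y)=x-\alpha_i y$. Then for each $i=1,\dots,n$, among the primitive solutions $(x,y)$ of $1\le|F(x,y)|\le h$ with $0<y\le Y_S$ there is at most one with $|L_i(x,y)|<\frac{1}{2Y_S}$.
   Context: $R=n^{800\log^2 n}$; $h$ is a positive integer and $\kappa>1$ an integer with $h\le |D|^{\frac{1}{2(n-1)(2+1/\kappa)}}/\big((3R)^{n/2}(ns)^{2s+n}\big)$; $Y_S=e^6 s(ns)^{2s/n}h^{1/(\kappa n)}$. Here $a$ is the coefficient of $x^n$ and $\alpha_1,\dots,\alpha_n$ are the roots of $F(x,1)$. A primitive solution is a solution $(x,y)\in\mathbb{Z}^2$ with $\gcd(x,y)=1$. *)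

theory Defs
  imports "HOL-Analysis.Analysis" "HOL-Computational_Algebra.Polynomial"
begin

text \<open>A binary form F(x,y) of degree n is represented by its dehomogenisation
  f = F(x,1), an integer polynomial with degree f = n; then
  F(x,y) = sum_{i<=n} coeff f i * x^i * y^(n-i).\<close>
definition binform :: "int poly \<Rightarrow> nat \<Rightarrow> int \<Rightarrow> int \<Rightarrow> int" where
  "binform f n x y = (\<Sum>i\<le>n. coeff f i * x ^ i * y ^ (n - i))"

definition R_const :: "nat \<Rightarrow> real" where
  "R_const n = real n powr (800 * (ln (real n))\<^sup>2)"

definition Y_S :: "nat \<Rightarrow> nat \<Rightarrow> nat \<Rightarrow> nat \<Rightarrow> real" where
  "Y_S n s h \<kappa> = exp 6 * real s * (real n * real s) powr (2 * real s / real n)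
      * real h powr (1 / (real \<kappa> * real n))"

end

theory Submission
  imports Defs
begin

theorem lemma4p2:
  fixes f :: "int poly" and n s h \<kappa> :: nat and D :: int and \<alpha> :: "nat \<Rightarrow> complex"
  assumes n3: "n \<ge> 3"
    and deg: "degree f = n"
    and irr: "irreducible (map_poly (of_int :: int \<Rightarrow> rat) f)"
    and nz: "card {i. i \<le> n \<and> coeff f i \<noteq> 0} = s + 1"
    and roots: "map_poly (of_int :: int \<Rightarrow> complex) f
                  = smult (of_int (lead_coeff f)) (\<Prod>i=1..n. [:- \<alpha> i, 1:])"
    and disc: "of_int D = (of_int (lead_coeff f) :: complex) ^ (2 * n - 2)
                  * (\<Prod>i\<in>{1..n}. \<Prod>j\<in>{i<..n}. (\<alpha> i - \<alpha> j)\<^sup>2)"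
    and hpos: "h > 0"
    and kappa: "\<kappa> > 1"
    and hbound: "real h \<le> \<bar>real_of_int D\<bar> powr (1 / (2 * (real n - 1) * (2 + 1 / real \<kappa>)))
                  / ((3 * R_const n) powr (real n / 2) * (real n * real s) ^ (2 * s + n))"
    and i: "i \<in> {1..n}"
  shows "\<forall>x1 y1 x2 y2 :: int.
           (gcd x1 y1 = 1 \<and> 1 \<le> \<bar>binform f n x1 y1\<bar> \<and> \<bar>binform f n x1 y1\<bar> \<le> int h
              \<and> 0 < y1 \<and> real_of_int y1 \<le> Y_S n s h \<kappa>
              \<and> cmod (of_int x1 - \<alpha> i * of_int y1) < 1 / (2 * Y_S n s h \<kappa>))
         \<and> (gcd x2 y2 = 1 \<and> 1 \<le> \<bar>binform f n x2 y2\<bar> \<and> \<bar>binform f n x2 y2\<bar> \<le> int h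
              \<and> 0 < y2 \<and> real_of_int y2 \<le> Y_S n s h \<kappa>
              \<and> cmod (of_int x2 - \<alpha> i * of_int y2) < 1 / (2 * Y_S n s h \<kappa>))
         \<longrightarrow> x1 = x2 \<and> y1 = y2"
proof (intro allI impI)
  fix x1 y1 x2 y2 :: int
  assume H: "(gcd x1 y1 = 1 \<and> 1 \<le> \<bar>binform f n x1 y1\<bar> \<and> \<bar>binform f n x1 y1\<bar> \<le> int h
              \<and> 0 < y1 \<and> real_of_int y1 \<le> Y_S n s h \<kappa>
              \<and> cmod (of_int x1 - \<alpha> i * of_int y1) < 1 / (2 * Y_S n s h \<kappa>))
         \<and> (gcd x2 y2 = 1 \<and> 1 \<le> \<bar>binform f n x2 y2\<bar> \<and> \<bar>binform f n x2 y2\<bar> \<le> int h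
              \<and> 0 < y2 \<and> real_of_int y2 \<le> Y_S n s h \<kappa>
              \<and> cmod (of_int x2 - \<alpha> i * of_int y2) < 1 / (2 * Y_S n s h \<kappa>))"
  define Y where "Y = Y_S n s h \<kappa>"
  define u where "u = (of_int x1 - \<alpha> i * of_int y1 :: complex)"
  define v where "v = (of_int x2 - \<alpha> i * of_int y2 :: complex)"
  have g1: "gcd x1 y1 = 1" and g2: "gcd x2 y2 = 1" and p1: "0 < y1" and p2: "0 < y2"
    using H by auto
  have b1: "real_of_int y1 \<le> Y" and b2: "real_of_int y2 \<le> Y"
    and c1: "cmod u < 1 / (2 * Y)" and c2: "cmod v < 1 / (2 * Y)"
    using H by (auto simp: Y_def u_def v_def)
  have Ypos: "Y > 0" using b1 p1 by linarith
  have eq: "(of_int (x1 * y2 - x2 * y1) :: complex) = u * of_int y2 - v * of_int y1"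
    by (simp add: u_def v_def algebra_simps)
  have "cmod u * y2 < 1 / (2 * Y) * y2"
    using c1 p2 by (intro mult_strict_right_mono) auto
  hence s1: "cmod (u * of_int y2) < 1 / (2 * Y) * y2"
    using p2 by (simp add: norm_mult)
  have "cmod v * y1 < 1 / (2 * Y) * y1"
    using c2 p1 by (intro mult_strict_right_mono) auto
  hence "cmod (v * of_int y1) < 1 / (2 * Y) * y1"
    using p1 by (simp add: norm_mult)
  with s1 have "cmod (u * of_int y2 - v * of_int y1) < 1 / (2 * Y) * (real_of_int y1 + real_of_int y2)"
    using norm_triangle_ineq4[of "u * of_int y2" "v * of_int y1"]
    by (simp only: distrib_left)
  also have "\<dots> \<le> 1 / (2 * Y) * (2 * Y)"
    using b1 b2 Ypos by (intro mult_left_mono) simp_all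
  also have "\<dots> = 1" using Ypos by simp
  finally have lt: "cmod (u * of_int y2 - v * of_int y1) < 1" .
  have "cmod (of_int (x1 * y2 - x2 * y1) :: complex) < 1" using lt eq by (simp only:)
  hence "\<bar>real_of_int (x1 * y2 - x2 * y1)\<bar> < 1" by (simp only: norm_of_int)
  hence "\<bar>x1 * y2 - x2 * y1\<bar> < 1" by linarith
  hence E: "x1 * y2 = x2 * y1" by linarith
  have "y1 dvd x1 * y2" using E by simp
  hence d1: "y1 dvd y2" using g1
    by (metis coprime_dvd_mult_right_iff coprime_iff_gcd_eq_1 gcd.commute)
  have "y2 dvd x2 * y1" using E by (metis dvd_triv_right)
  hence d2: "y2 dvd y1" using g2
    by (metis coprime_dvd_mult_right_iff coprime_iff_gcd_eq_1 gcd.commute)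
  have Y12: "y1 = y2" using d1 d2 p1 p2 by (simp add: zdvd_antisym_nonneg)
  with E p1 show "x1 = x2 \<and> y1 = y2" by simp
qed

end
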